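(* For every instance $(N,C,\mathbf{A},k)$ with $|N|=n$ that has at least one cohesive group, the committee output by GreedyAV has JR degree at least $\frac{n}{k^2}$.
   Context: An instance consists of voters $N=\{1,\dots,n\}$, candidates $C$, approval ballots $A_i\subseteq C$ for $i\in N$, and a committee size $k$ with $1\le k\le|C|$. A set $N'\subseteq N$ is a cohesive group if $|N'|\ge n/k$ and $|\bigcap_{i\in N'}A_i|\ge 1$. A size-$k$ committee $W\subseteq C$ achieves JR degree $c$ if every cohesive group contains at least $c$ voters $i$ with $|A_i\cap W|\ge1$. GreedyAV: start with $W=\emptyset$ and the set $R=N$ of remaining voters; repeat $k$ times: choose a candidate $c\notin W$ approved by the maximum number of voters in $R$ (ties broken arbitrarily), add $c$ to $W$, and remove from $R$ all voters approving $c$; output $W$. *)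

theory Defs
  imports Complex_Main
begin

(* Voters are N = {1..n}; ballots A :: nat => 'c set; candidates C :: 'c set. *)

definition cohesive_group :: "nat set \<Rightarrow> 'c set \<Rightarrow> (nat \<Rightarrow> 'c set) \<Rightarrow> nat \<Rightarrow> nat set \<Rightarrow> bool" where
  "cohesive_group N C A k N' \<longleftrightarrow>
     N' \<subseteq> N \<and> real (card N') \<ge> real (card N) / real k \<and>
     card {c \<in> C. \<forall>i\<in>N'. c \<in> A i} \<ge> 1"

definition achieves_JR_degree ::
  "nat set \<Rightarrow> 'c set \<Rightarrow> (nat \<Rightarrow> 'c set) \<Rightarrow> nat \<Rightarrow> 'c set \<Rightarrow> nat \<Rightarrow> bool" where
  "achieves_JR_degree N C A k W d \<longleftrightarrow>
     (\<forall>N'. cohesive_group N C A k N' \<longrightarrow> card {i \<in> N'. card (A i \<inter> W) \<ge> 1} \<ge> d)"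

(* one iteration of GreedyAV on state (W, R); ties broken arbitrarily *)
definition greedyAV_step ::
  "'c set \<Rightarrow> (nat \<Rightarrow> 'c set) \<Rightarrow> ('c set \<times> nat set) \<Rightarrow> ('c set \<times> nat set) \<Rightarrow> bool" where
  "greedyAV_step C A s s' \<longleftrightarrow>
     (\<exists>c \<in> C - fst s.
        (\<forall>c' \<in> C - fst s. card {i \<in> snd s. c' \<in> A i} \<le> card {i \<in> snd s. c \<in> A i}) \<and>
        s' = (insert c (fst s), snd s - {i. c \<in> A i}))"

definition greedyAV_output :: "nat set \<Rightarrow> 'c set \<Rightarrow> (nat \<Rightarrow> 'c set) \<Rightarrow> nat \<Rightarrow> 'c set \<Rightarrow> bool" where
  "greedyAV_output N C A k W \<longleftrightarrow> (\<exists>R. (greedyAV_step C A ^^ k) ({}, N) (W, R))"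

end

theory Submission
  imports Defs
begin

lemma nat_ceil_le: "(r::real) \<le> real (x::nat) \<Longrightarrow> nat (ceiling r) \<le> x"
  by (simp add: ceiling_le_iff nat_le_iff)

lemma step_props:
  assumes "greedyAV_step C A s s'"
  shows "\<exists>c \<in> C - fst s. (\<forall>c' \<in> C - fst s. card {i \<in> snd s. c' \<in> A i} \<le> card {i \<in> snd s. c \<in> A i})
     \<and> fst s' = insert c (fst s) \<and> snd s' = snd s - {i. c \<in> A i}"
  using assms unfolding greedyAV_step_def by auto

lemma iter_inv:
  assumes "(greedyAV_step C A ^^ m) s0 s" "fst s0 \<subseteq> C" "snd s0 = {i\<in>N. A i \<inter> fst s0 = {}}"
  shows "fst s \<subseteq> C \<and> snd s = {i\<in>N. A i \<inter> fst s = {}} \<and> fst s0 \<subseteq> fst s"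
  using assms(1)
proof (induction m arbitrary: s)
  case 0
  then show ?case using assms by auto
next
  case (Suc m)
  then obtain s' where s': "(greedyAV_step C A ^^ m) s0 s'" "greedyAV_step C A s' s" by auto
  from Suc.IH[OF s'(1)] have IH: "fst s' \<subseteq> C" "snd s' = {i\<in>N. A i \<inter> fst s' = {}}" "fst s0 \<subseteq> fst s'" by auto
  from step_props[OF s'(2)] obtain c where c: "c \<in> C - fst s'" "fst s = insert c (fst s')"
    "snd s = snd s' - {i. c \<in> A i}" by blast
  show ?case using IH c by auto
qed

lemma iter_card:
  assumes "(greedyAV_step C A ^^ m) s0 s" "finite (snd s0)" "c \<in> C" "c \<notin> fst s"
  shows "card (snd s) + m * card {i \<in> snd s. c \<in> A i} \<le> card (snd s0)
     \<and> fst s0 \<subseteq> fst s \<and> snd s \<subseteq> snd s0"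
  using assms(1,4)
proof (induction m arbitrary: s)
  case 0
  then show ?case by auto
next
  case (Suc m)
  then obtain s' where s': "(greedyAV_step C A ^^ m) s0 s'" "greedyAV_step C A s' s" by auto
  from step_props[OF s'(2)] obtain c' where c': "c' \<in> C - fst s'"
    "\<forall>c'' \<in> C - fst s'. card {i \<in> snd s'. c'' \<in> A i} \<le> card {i \<in> snd s'. c' \<in> A i}"
    "fst s = insert c' (fst s')" "snd s = snd s' - {i. c' \<in> A i}" by blast
  have cs': "c \<notin> fst s'" using Suc.prems c'(3) by auto
  from Suc.IH[OF s'(1) cs'] have IH: "card (snd s') + m * card {i \<in> snd s'. c \<in> A i} \<le> card (snd s0)"
    "fst s0 \<subseteq> fst s'" "snd s' \<subseteq> snd s0" by auto
  have fin: "finite (snd s')" using IH(3) assms(2) finite_subset by blast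
  have ge: "card {i \<in> snd s'. c \<in> A i} \<le> card {i \<in> snd s'. c' \<in> A i}" using c'(2) cs' assms(3) by blast
  have sub: "{i \<in> snd s. c \<in> A i} \<subseteq> {i \<in> snd s'. c \<in> A i}" using c'(4) by auto
  have le1: "card {i \<in> snd s. c \<in> A i} \<le> card {i \<in> snd s'. c \<in> A i}"
    by (rule card_mono) (use fin sub in auto)
  have eq: "snd s = snd s' - {i \<in> snd s'. c' \<in> A i}" using c'(4) by auto
  have ceq: "card (snd s) = card (snd s') - card {i \<in> snd s'. c' \<in> A i}"
    unfolding eq by (rule card_Diff_subset) (use fin in auto)
  have cle: "card {i \<in> snd s'. c' \<in> A i} \<le> card (snd s')" by (rule card_mono) (use fin in auto)
  have "m * card {i \<in> snd s. c \<in> A i} \<le> m * card {i \<in> snd s'. c \<in> A i}" using le1 by simp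
  then have "card (snd s) + Suc m * card {i \<in> snd s. c \<in> A i} \<le> card (snd s0)"
    unfolding mult_Suc using IH(1) ceq cle le1 ge by linarith
  moreover have "fst s0 \<subseteq> fst s" "snd s \<subseteq> snd s0" using IH c' by auto
  ultimately show ?case by auto
qed

theorem proposition2:
  fixes n k :: nat and C :: "'c set" and A :: "nat \<Rightarrow> 'c set" and W :: "'c set"
  assumes "finite C"
    and "\<forall>i \<in> {1..n}. A i \<subseteq> C"
    and "1 \<le> k" and "k \<le> card C"
    and "\<exists>N'. cohesive_group {1..n} C A k N'"
    and "greedyAV_output {1..n} C A k W"
  shows "\<exists>d. real d \<ge> real n / real k ^ 2 \<and> achieves_JR_degree {1..n} C A k W d"
proof -
  define N where "N = {1..n}"
  obtain R where run: "(greedyAV_step C A ^^ k) ({}, N) (W, R)"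
    using assms(6) unfolding greedyAV_output_def N_def by auto
  have inv: "W \<subseteq> C \<and> R = {i\<in>N. A i \<inter> W = {}}"
    using iter_inv[OF run, of N] by auto
  have finW: "finite W" using inv assms(1) finite_subset by blast
  have kpos: "real k \<ge> 1" using assms(3) by simp
  have key: "real (card {i \<in> N'. card (A i \<inter> W) \<ge> 1}) \<ge> real n / real k ^ 2"
    if coh: "cohesive_group N C A k N'" for N'
  proof -
    have N'N: "N' \<subseteq> N" and sN': "real (card N') \<ge> real n / real k"
      and ne: "card {c \<in> C. \<forall>i\<in>N'. c \<in> A i} \<ge> 1"
      using coh unfolding cohesive_group_def N_def by auto
    obtain c where c: "c \<in> C" "\<forall>i\<in>N'. c \<in> A i"
      proof -
      have "{c \<in> C. \<forall>i\<in>N'. c \<in> A i} \<noteq> {}" using ne by (cases "{c \<in> C. \<forall>i\<in>N'. c \<in> A i} = {}") simp_all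
      then show ?thesis using that by blast
    qed
    have finN': "finite N'" using N'N N_def finite_subset by blast
    have cov: "{i \<in> N'. card (A i \<inter> W) \<ge> 1} = N' - R"
    proof -
      have "\<And>i. card (A i \<inter> W) \<ge> 1 \<longleftrightarrow> A i \<inter> W \<noteq> {}"
        using finW by (simp add: Suc_le_eq card_gt_0_iff)
      then show ?thesis using inv N'N by auto
    qed
    have nk2: "real n / real k ^ 2 \<le> real n / real k"
      using kpos by (simp add: divide_left_mono power2_eq_square)
    show ?thesis
    proof (cases "c \<in> W")
      case True
      then have "N' - R = N'" using inv c by auto
      then show ?thesis using cov sN' nk2 by simp
    next
      case False
      have kk: "Suc (k - 1) = k" using assms(3) by simp
      have "(greedyAV_step C A ^^ Suc (k - 1)) ({}, N) (W, R)" unfolding kk by (rule run)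
      from relpowp_Suc_D2[OF this] obtain s1 where s1: "greedyAV_step C A ({}, N) s1"
        "(greedyAV_step C A ^^ (k - 1)) s1 (W, R)" by blast
      from step_props[OF s1(1)] obtain c1 where c1: "c1 \<in> C"
        "\<forall>c'' \<in> C. card {i \<in> N. c'' \<in> A i} \<le> card {i \<in> N. c1 \<in> A i}"
        "snd s1 = N - {i. c1 \<in> A i}" by auto
      have finN: "finite N" unfolding N_def by simp
      have "card N' \<le> card {i \<in> N. c \<in> A i}"
        by (rule card_mono) (use finN N'N c in auto)
      also have "\<dots> \<le> card {i \<in> N. c1 \<in> A i}" using c1 c by blast
      finally have a: "card N' \<le> card {i \<in> N. c1 \<in> A i}" .
      have "snd s1 = N - {i \<in> N. c1 \<in> A i}" using c1 by auto
      moreover have "card (N - {i \<in> N. c1 \<in> A i}) = card N - card {i \<in> N. c1 \<in> A i}"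
        by (rule card_Diff_subset) (use finN in auto)
      moreover have "card N = n" unfolding N_def by simp
      ultimately have b: "card (snd s1) = n - card {i \<in> N. c1 \<in> A i}" by simp
      have fs1: "finite (snd s1)" using c1 finN by auto
      from iter_card[OF s1(2) fs1 c(1)] False
      have d: "card R + (k - 1) * card {i \<in> R. c \<in> A i} \<le> card (snd s1)" by auto
      define U where "U = N' \<inter> R"
      have finR: "finite R" using inv finN by auto
      have "card U \<le> card R" unfolding U_def by (rule card_mono) (use finR in auto)
      moreover have "card U \<le> card {i \<in> R. c \<in> A i}"
        unfolding U_def by (rule card_mono) (use finR c in auto)
      ultimately have "card U + (k - 1) * card U \<le> card R + (k - 1) * card {i \<in> R. c \<in> A i}"
        by (simp add: add_mono)
      moreover have Yn: "card {i \<in> N. c1 \<in> A i} \<le> n"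
      proof -
        have "card {i \<in> N. c1 \<in> A i} \<le> card N" by (rule card_mono) (use finN in auto)
        then show ?thesis unfolding N_def by simp
      qed
      moreover have ku: "k * card U = card U + (k - 1) * card U" using assms(3) by (cases k) auto
      ultimately have "k * card U + card N' \<le> n" using d b a by linarith
      then have "real (k * card U + card N') \<le> real n" by (simp only: of_nat_le_iff)
      then have e: "real k * real (card U) + real (card N') \<le> real n" by simp
      have cd: "card (N' - R) = card N' - card U"
        unfolding U_def using finN' by (simp add: card_Diff_subset_Int)
      have UN: "card U \<le> card N'" unfolding U_def by (rule card_mono) (use finN' in auto)
      have r: "real (card (N' - R)) = real (card N') - real (card U)" using cd UN by simp
      have "real n / real k ^ 2 \<le> real (card N') - real (card U)"
      proof -
        have k0: "real k > 0" using kpos by simp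
        have "real k * (real (card N') - real (card U)) \<ge> real (card N') + real k * real (card N') - real n"
          using e by (simp add: algebra_simps)
        moreover have "real k * real (card N') \<ge> real n"
          using sN' k0 by (simp add: field_simps)
        ultimately have "real k * (real (card N') - real (card U)) \<ge> real n / real k"
          using sN' by linarith
        then have "real (card N') - real (card U) \<ge> real n / real k / real k"
          using k0 by (simp add: field_simps)
        then show ?thesis by (simp add: power2_eq_square)
      qed
      then show ?thesis using cov r by simp
    qed
  qed
  have "achieves_JR_degree {1..n} C A k W (nat (ceiling (real n / real k ^ 2)))"
    unfolding achieves_JR_degree_def
  proof (intro allI impI)
    fix N' assume "cohesive_group {1..n} C A k N'"
    then have "real n / real k ^ 2 \<le> real (card {i \<in> N'. card (A i \<inter> W) \<ge> 1})"
      using key unfolding N_def by blast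
    then show "nat (ceiling (real n / real k ^ 2)) \<le> card {i \<in> N'. card (A i \<inter> W) \<ge> 1}"
      by (rule nat_ceil_le)
  qed
  moreover have "real n / real k ^ 2 \<le> real (nat (ceiling (real n / real k ^ 2)))"
    by linarith
  ultimately show ?thesis by blast
qed

end
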